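(* Let $G$ be a $k$-degenerate graph with maximum degree $\Delta(G)>1$ and let $H$ be an $l$-degenerate graph. Then $G+_Q H$ is $\max\{2\Delta(G)-2,\,k+l\}$-degenerate.
   Context: A graph is $k$-degenerate if its vertices can be successively deleted so that each deleted vertex has degree at most $k$ at the time of deletion. The line superposition graph $Q(G)$ has vertex set $V(G)\cup E(G)$: it is the subdivision graph $S(G)$ (each edge $e=xy$ of $G$ replaced by the path $x\,e\,y$) together with edges $ee'$ between new vertices $e,e'$ whenever the edges $e,e'$ are adjacent in $G$. The $Q$-sum $G+_Q H$ has vertex set $(V(G)\cup E(G))\times V(H)$, and $(u_1,u_2)\sim(v_1,v_2)$ iff [$u_1=v_1\in V(G)$ and $u_2v_2\in E(H)$] or [$u_2=v_2$ and $u_1v_1\in E(Q(G))$]. *)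

theory Defs
  imports Main
begin

type_synonym 'a graph = "'a set \<times> 'a set set"

definition verts :: "'a graph \<Rightarrow> 'a set" where "verts G = fst G"
definition edges :: "'a graph \<Rightarrow> 'a set set" where "edges G = snd G"

definition simple_graph :: "'a graph \<Rightarrow> bool" where
  "simple_graph G \<longleftrightarrow> finite (verts G) \<and>
     (\<forall>e \<in> edges G. e \<subseteq> verts G \<and> card e = 2)"

definition degree :: "'a graph \<Rightarrow> 'a \<Rightarrow> nat" where
  "degree G v = card {u \<in> verts G. {v, u} \<in> edges G}"

definition max_degree :: "'a graph \<Rightarrow> nat" where
  "max_degree G = (if verts G = {} then 0 else Max (degree G ` verts G))"

definition degenerate :: "nat \<Rightarrow> 'a graph \<Rightarrow> bool" where
  "degenerate k G \<longleftrightarrow> (\<exists>vs. distinct vs \<and> set vs = verts G \<and>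
     (\<forall>i < length vs. card {u \<in> set (drop i vs). {vs ! i, u} \<in> edges G} \<le> k))"

text \<open>Line superposition graph Q(G): vertices V(G) (as Inl) and E(G) (as Inr).\<close>
definition Q_graph :: "'a graph \<Rightarrow> ('a + 'a set) graph" where
  "Q_graph G = (Inl ` verts G \<union> Inr ` edges G,
     {{Inl x, Inr e} | x e. e \<in> edges G \<and> x \<in> e} \<union>
     {{Inr e, Inr e'} | e e'. e \<in> edges G \<and> e' \<in> edges G \<and> e \<noteq> e' \<and> e \<inter> e' \<noteq> {}})"

definition Q_sum :: "'a graph \<Rightarrow> 'b graph \<Rightarrow> (('a + 'a set) \<times> 'b) graph" where
  "Q_sum G H = (verts (Q_graph G) \<times> verts H,
     {{(Inl x, u2), (Inl x, v2)} | x u2 v2. x \<in> verts G \<and> {u2, v2} \<in> edges H} \<union>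
     {{(u1, w), (v1, w)} | u1 v1 w. w \<in> verts H \<and> {u1, v1} \<in> edges (Q_graph G)})"

end

theory Submission imports Defs begin
lemma nbrL:
  assumes "{(Inl x, w), u} \<in> edges (Q_sum G H)"
  shows "(\<exists>w'. u = (Inl x, w') \<and> {w,w'} \<in> edges H) \<or> (\<exists>e. u = (Inr e, w) \<and> e \<in> edges G \<and> x \<in> e)"
  using assms unfolding Q_sum_def Q_graph_def edges_def
  apply (simp add: doubleton_eq_iff)
  apply (elim disjE exE conjE; simp add: insert_commute)
  done
lemma nbrR:
  assumes "{(Inr e, w), u} \<in> edges (Q_sum G H)"
  shows "(\<exists>x. u = (Inl x, w) \<and> x \<in> e \<and> e \<in> edges G) \<or>
         (\<exists>e'. u = (Inr e', w) \<and> e' \<in> edges G \<and> e \<in> edges G \<and> e' \<noteq> e \<and> e \<inter> e' \<noteq> {})"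
  using assms unfolding Q_sum_def Q_graph_def edges_def
  apply (simp add: doubleton_eq_iff)
  apply (elim disjE exE conjE; simp add: insert_commute Int_commute)
  done
lemma finite_edges:
  assumes "simple_graph G" shows "finite (edges G)"
proof -
  have "edges G \<subseteq> Pow (verts G)" using assms unfolding simple_graph_def by auto
  thus ?thesis using assms unfolding simple_graph_def by (meson finite_Pow_iff finite_subset)
qed

lemma edge2:
  assumes "simple_graph G" "e \<in> edges G" "x \<in> e"
  shows "\<exists>y. e = {x,y} \<and> y \<noteq> x \<and> y \<in> verts G \<and> x \<in> verts G"
proof -
  have "card e = 2" "e \<subseteq> verts G" using assms unfolding simple_graph_def by auto
  then obtain a b where "e = {a,b}" "a \<noteq> b" by (meson card_2_iff)
  thus ?thesis using assms(3) \<open>e \<subseteq> verts G\<close> by auto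
qed

lemma edges_at:
  assumes "simple_graph G"
  shows "card {e \<in> edges G. x \<in> e} \<le> max_degree G"
proof (cases "x \<in> verts G")
  case False
  then have "{e \<in> edges G. x \<in> e} = {}" using edge2[OF assms] by blast
  then show ?thesis by (metis card.empty zero_le)
next
  case True
  have fin: "finite (verts G)" using assms unfolding simple_graph_def by auto
  have sub: "{e \<in> edges G. x \<in> e} \<subseteq> (\<lambda>z. {x,z}) ` {z \<in> verts G. {x,z} \<in> edges G}"
  proof
    fix e assume "e \<in> {e \<in> edges G. x \<in> e}"
    then have "e \<in> edges G" "x \<in> e" by auto
    then obtain y where "e = {x,y}" "y \<in> verts G" using edge2[OF assms] by blast
    then show "e \<in> (\<lambda>z. {x,z}) ` {z \<in> verts G. {x,z} \<in> edges G}" using \<open>e \<in> edges G\<close> by blast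
  qed
  have f2: "finite {z \<in> verts G. {x,z} \<in> edges G}" using fin by simp
  have "card {e \<in> edges G. x \<in> e} \<le> card ((\<lambda>z. {x,z}) ` {z \<in> verts G. {x,z} \<in> edges G})"
    using sub f2 by (intro card_mono) auto
  also have "\<dots> \<le> card {z \<in> verts G. {x,z} \<in> edges G}" by (rule card_image_le[OF f2])
  also have "\<dots> = degree G x" unfolding degree_def by simp
  also have "\<dots> \<le> max_degree G" unfolding max_degree_def using True fin by auto
  finally show ?thesis .
qed

lemma degen_sub:
  assumes "degenerate k G" "X \<subseteq> verts G" "X \<noteq> {}"
  shows "\<exists>x\<in>X. card {z \<in> X. {x,z} \<in> edges G} \<le> k"
proof -
  obtain vs where vs: "distinct vs" "set vs = verts G"
    "\<forall>i < length vs. card {u \<in> set (drop i vs). {vs ! i, u} \<in> edges G} \<le> k"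
    using assms(1) unfolding degenerate_def by blast
  define i where "i = (LEAST i. i < length vs \<and> vs ! i \<in> X)"
  obtain z0 where "z0 \<in> X" using assms(3) by blast
  then have "z0 \<in> set vs" using assms(2) vs(2) by blast
  then obtain j0 where "j0 < length vs" "vs ! j0 = z0" by (auto simp: in_set_conv_nth)
  then have ex: "\<exists>i. i < length vs \<and> vs ! i \<in> X" using \<open>z0 \<in> X\<close> by blast
  have i: "i < length vs" "vs ! i \<in> X" using LeastI_ex[OF ex] unfolding i_def by auto
  have "X \<subseteq> set (drop i vs)"
  proof
    fix z assume "z \<in> X"
    then have "z \<in> set vs" using assms(2) vs(2) by blast
    then obtain j where j: "j < length vs" "vs ! j = z" by (auto simp: in_set_conv_nth)
    have "i \<le> j" unfolding i_def using j \<open>z \<in> X\<close> by (intro Least_le) simp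
    have "drop i vs ! (j - i) = vs ! j" using \<open>i \<le> j\<close> j by simp
    moreover have "j - i < length (drop i vs)" using j \<open>i \<le> j\<close> by simp
    ultimately show "z \<in> set (drop i vs)" using j(2) by (metis nth_mem)
  qed
  then have "card {z \<in> X. {vs ! i, z} \<in> edges G} \<le> card {u \<in> set (drop i vs). {vs ! i, u} \<in> edges G}"
    by (intro card_mono) auto
  then show ?thesis using vs(3) i by (meson le_trans)
qed

lemma degen_intro:
  assumes fin: "finite (verts G)"
    and loc: "\<And>S. S \<subseteq> verts G \<Longrightarrow> S \<noteq> {} \<Longrightarrow> \<exists>v\<in>S. card {u \<in> S. {v,u} \<in> edges G} \<le> d"
  shows "degenerate d G"
proof -
  have "\<forall>S. S \<subseteq> verts G \<longrightarrow> card S = n \<longrightarrow> (\<exists>vs. distinct vs \<and> set vs = S \<and>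
     (\<forall>i < length vs. card {u \<in> set (drop i vs). {vs ! i, u} \<in> edges G} \<le> d))" for n
  proof (induction n)
    case 0
    show ?case
    proof (intro allI impI)
      fix S assume "S \<subseteq> verts G" "card S = 0"
      then have "S = {}" using fin by (meson card_0_eq finite_subset)
      then show "\<exists>vs. distinct vs \<and> set vs = S \<and>
     (\<forall>i < length vs. card {u \<in> set (drop i vs). {vs ! i, u} \<in> edges G} \<le> d)" by auto
    qed
  next
    case (Suc n)
    show ?case
    proof (intro allI impI)
      fix S assume S: "S \<subseteq> verts G" "card S = Suc n"
      then have "S \<noteq> {}" by auto
      then obtain v where v: "v \<in> S" "card {u \<in> S. {v,u} \<in> edges G} \<le> d" using loc S by blast
      have "finite S" using S fin finite_subset by auto
      then have "card (S - {v}) = n" using S v by auto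
      have "S - {v} \<subseteq> verts G" using S by blast
      then obtain vs where vs: "distinct vs" "set vs = S - {v}"
        "\<forall>i < length vs. card {u \<in> set (drop i vs). {vs ! i, u} \<in> edges G} \<le> d"
        using Suc.IH \<open>S - {v} \<subseteq> verts G\<close> \<open>card (S - {v}) = n\<close> by blast
      show "\<exists>vs. distinct vs \<and> set vs = S \<and>
     (\<forall>i < length vs. card {u \<in> set (drop i vs). {vs ! i, u} \<in> edges G} \<le> d)"
      proof (intro exI conjI allI impI)
        show "distinct (v # vs)" using vs v by auto
        show "set (v # vs) = S" using vs v by auto
        fix i assume "i < length (v # vs)"
        show "card {u \<in> set (drop i (v # vs)). {(v # vs) ! i, u} \<in> edges G} \<le> d"
        proof (cases i)
          case 0
          have "set (drop i (v # vs)) = S" "(v # vs) ! i = v" using 0 \<open>set (v # vs) = S\<close> by simp_all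
          then show ?thesis using v(2) by simp
        next
          case (Suc j)
          then show ?thesis using vs(3) \<open>i < length (v # vs)\<close> by simp
        qed
      qed
    qed
  qed
  then have "\<exists>vs. distinct vs \<and> set vs = verts G \<and>
     (\<forall>i < length vs. card {u \<in> set (drop i vs). {vs ! i, u} \<in> edges G} \<le> d)"
    using order_refl by blast
  then show ?thesis unfolding degenerate_def .
qed


lemma verts_QS: "verts (Q_sum G H) = (Inl ` verts G \<union> Inr ` edges G) \<times> verts H"
  by (simp add: Q_sum_def Q_graph_def verts_def)

lemma boundL:
  assumes "finite W" "\<And>w'. (Inl x, w') \<in> S \<Longrightarrow> w' \<in> W" "simple_graph G"
  shows "card {u\<in>S. {(Inl x,w),u} \<in> edges (Q_sum G H)}
         \<le> card {w'\<in>W. {w,w'} \<in> edges H} + card {e\<in>edges G. x\<in>e \<and> (Inr e,w)\<in>S}"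
proof -
  have fE: "finite (edges G)" using finite_edges[OF assms(3)] .
  have "{u\<in>S. {(Inl x,w),u} \<in> edges (Q_sum G H)} \<subseteq>
     (\<lambda>w'. (Inl x, w')) ` {w'\<in>W. {w,w'} \<in> edges H} \<union> (\<lambda>e. (Inr e, w)) ` {e\<in>edges G. x\<in>e \<and> (Inr e,w)\<in>S}"
  proof
    fix u assume u: "u \<in> {u\<in>S. {(Inl x,w),u} \<in> edges (Q_sum G H)}"
    then have uS: "u \<in> S" by blast
    from u have "{(Inl x,w),u} \<in> edges (Q_sum G H)" by blast
    from nbrL[OF this] show "u \<in> (\<lambda>w'. (Inl x, w')) ` {w'\<in>W. {w,w'} \<in> edges H} \<union> (\<lambda>e. (Inr e, w)) ` {e\<in>edges G. x\<in>e \<and> (Inr e,w)\<in>S}"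
    proof (elim disjE exE conjE)
      fix w' assume "u = (Inl x, w')" "{w, w'} \<in> edges H"
      then show ?thesis using uS assms(2) by blast
    next
      fix e assume "u = (Inr e, w)" "e \<in> edges G" "x \<in> e"
      then show ?thesis using uS by blast
    qed
  qed
  then have "card {u\<in>S. {(Inl x,w),u} \<in> edges (Q_sum G H)} \<le>
     card ((\<lambda>w'. (Inl x, w')) ` {w'\<in>W. {w,w'} \<in> edges H} \<union> (\<lambda>e. (Inr e, w)) ` {e\<in>edges G. x\<in>e \<and> (Inr e,w)\<in>S})"
    by (intro card_mono) (use assms(1) fE in auto)
  also have "\<dots> \<le> card {w'\<in>W. {w,w'} \<in> edges H} + card {e\<in>edges G. x\<in>e \<and> (Inr e,w)\<in>S}"
    by (rule order_trans[OF card_Un_le add_mono[OF card_image_le card_image_le]]) (use assms(1) fE in auto)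
  finally show ?thesis .
qed

lemma boundR:
  assumes "simple_graph G" "e \<in> edges G" "(Inr e, w) \<in> S"
  shows "card {u\<in>S. {(Inr e,w),u} \<in> edges (Q_sum G H)}
         \<le> card {z. (Inl z, w) \<in> S \<and> z \<in> e} + (card {e'\<in>edges G. e\<inter>e'\<noteq>{} \<and> (Inr e',w)\<in>S} - 1)"
proof -
  have fE: "finite (edges G)" using finite_edges[OF assms(1)] .
  have fe: "finite e" "e \<noteq> {}" using assms(1,2) unfolding simple_graph_def
    by (auto intro: card_ge_0_finite)
  let ?F = "{e'\<in>edges G. e\<inter>e'\<noteq>{} \<and> (Inr e',w)\<in>S}"
  have eF: "e \<in> ?F" using assms fe by auto
  have "{u\<in>S. {(Inr e,w),u} \<in> edges (Q_sum G H)} \<subseteq>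
     (\<lambda>z. (Inl z, w)) ` {z. (Inl z, w) \<in> S \<and> z \<in> e} \<union> (\<lambda>e'. (Inr e', w)) ` (?F - {e})"
  proof
    fix u assume u: "u \<in> {u\<in>S. {(Inr e,w),u} \<in> edges (Q_sum G H)}"
    then have uS: "u \<in> S" by blast
    from u have "{(Inr e,w),u} \<in> edges (Q_sum G H)" by blast
    from nbrR[OF this] show "u \<in> (\<lambda>z. (Inl z, w)) ` {z. (Inl z, w) \<in> S \<and> z \<in> e} \<union> (\<lambda>e'. (Inr e', w)) ` (?F - {e})"
    proof (elim disjE exE conjE)
      fix z assume "u = (Inl z, w)" "z \<in> e"
      then show ?thesis using uS by blast
    next
      fix e' assume "u = (Inr e', w)" "e' \<in> edges G" "e' \<noteq> e" "e \<inter> e' \<noteq> {}"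
      then show ?thesis using uS by blast
    qed
  qed
  then have "card {u\<in>S. {(Inr e,w),u} \<in> edges (Q_sum G H)} \<le>
     card ((\<lambda>z. (Inl z, w)) ` {z. (Inl z, w) \<in> S \<and> z \<in> e} \<union> (\<lambda>e'. (Inr e', w)) ` (?F - {e}))"
    by (intro card_mono) (use fe fE in auto)
  also have "\<dots> \<le> card {z. (Inl z, w) \<in> S \<and> z \<in> e} + card (?F - {e})"
    by (rule order_trans[OF card_Un_le add_mono[OF card_image_le card_image_le]]) (use fe fE in auto)
  also have "card (?F - {e}) = card ?F - 1" using eF fE by (simp add: card_Diff_singleton)
  finally show ?thesis .
qed

lemma card_Un_common:
  assumes "finite A" "finite B" "e \<in> A" "e \<in> B"
  shows "card (A \<union> B) + 1 \<le> card A + card B"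
proof -
  have "card (A \<inter> B) \<ge> 1" using assms by (metis IntI card_0_eq empty_iff finite_Int less_one not_le)
  then show ?thesis using card_Un_Int[OF assms(1,2)] by linarith
qed


lemma edge_elem:
  assumes "simple_graph G" "e \<in> edges G"
  obtains x y where "e = {x,y}" "x \<noteq> y" "x \<in> verts G" "y \<in> verts G"
proof -
  have "card e = 2" "e \<subseteq> verts G" using assms unfolding simple_graph_def by auto
  then obtain a b where "e = {a,b}" "a \<noteq> b" by (meson card_2_iff)
  then show ?thesis using that \<open>e \<subseteq> verts G\<close> by auto
qed

theorem theorem3:
  fixes G :: "'a graph" and H :: "'b graph" and k l :: nat
  assumes "simple_graph G" and "simple_graph H"
    and "degenerate k G" and "max_degree G > 1"
    and "degenerate l H"
  shows "degenerate (max (2 * max_degree G - 2) (k + l)) (Q_sum G H)"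
proof -
  define \<Delta> where "\<Delta> = max_degree G"
  have fV: "finite (verts G)" using assms(1) unfolding simple_graph_def by auto
  have fE: "finite (edges G)" using finite_edges[OF assms(1)] .
  have fVH: "finite (verts H)" using assms(2) unfolding simple_graph_def by auto
  have D2: "\<Delta> \<ge> 2" using assms(4) unfolding \<Delta>_def by simp
  have fQ: "finite (verts (Q_sum G H))" by (simp add: verts_QS fV fE fVH)
  have deg_at: "\<And>x. card {e\<in>edges G. x\<in>e} \<le> \<Delta>" unfolding \<Delta>_def using edges_at[OF assms(1)] .
  show ?thesis
  proof (rule degen_intro[OF fQ])
    fix S assume S: "S \<subseteq> verts (Q_sum G H)" "S \<noteq> {}"
    have Svert: "x \<in> verts G \<and> w \<in> verts H" if "(Inl x, w) \<in> S" for x w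
      using S(1) that unfolding verts_QS by auto
    have Sedge: "e \<in> edges G \<and> w \<in> verts H" if "(Inr e, w) \<in> S" for e w
      using S(1) that unfolding verts_QS by auto
    show "\<exists>v\<in>S. card {u\<in>S. {v,u} \<in> edges (Q_sum G H)} \<le> max (2 * max_degree G - 2) (k + l)"
    proof (cases "k + 1 \<le> \<Delta>")
      case True
      define X where "X = {x. \<exists>w. (Inl x, w) \<in> S} \<union> {x. \<exists>e w. (Inr e, w) \<in> S \<and> x \<in> e}"
      have XV: "X \<subseteq> verts G"
      proof
        fix x assume "x \<in> X"
        then show "x \<in> verts G"
        proof (cases "\<exists>w. (Inl x, w) \<in> S")
          case True then show ?thesis using Svert by blast
        next
          case False
          then obtain e w where "(Inr e, w) \<in> S" "x \<in> e" using \<open>x \<in> X\<close> unfolding X_def by blast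
          then show ?thesis using Sedge edge2[OF assms(1)] by blast
        qed
      qed
      have Xne: "X \<noteq> {}"
      proof -
        obtain a w where aw: "(a, w) \<in> S" using S(2) by auto
        show ?thesis
        proof (cases a)
          case (Inl x) then show ?thesis using aw unfolding X_def by blast
        next
          case (Inr e)
          then have "e \<in> edges G" using aw Sedge by blast
          then obtain x y where "e = {x,y}" using edge_elem[OF assms(1)] by metis
          then show ?thesis using aw Inr unfolding X_def by blast
        qed
      qed
      have fX: "finite X" using XV fV finite_subset by blast
      obtain x where x: "x \<in> X" "card {z\<in>X. {x,z} \<in> edges G} \<le> k"
        using degen_sub[OF assms(3) XV Xne] by blast
      have cardA: "card {e\<in>edges G. x\<in>e \<and> (Inr e,w)\<in>S} \<le> k" for w
      proof -
        have "{e\<in>edges G. x\<in>e \<and> (Inr e,w)\<in>S} \<subseteq> (\<lambda>z. {x,z}) ` {z\<in>X. {x,z} \<in> edges G}"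
        proof
          fix e assume e: "e \<in> {e\<in>edges G. x\<in>e \<and> (Inr e,w)\<in>S}"
          then obtain y where y: "e = {x,y}" using edge2[OF assms(1)] by blast
          then have "y \<in> X" using e unfolding X_def by blast
          then show "e \<in> (\<lambda>z. {x,z}) ` {z\<in>X. {x,z} \<in> edges G}" using y e by blast
        qed
        then have "card {e\<in>edges G. x\<in>e \<and> (Inr e,w)\<in>S} \<le> card ((\<lambda>z. {x,z}) ` {z\<in>X. {x,z} \<in> edges G})"
          using fX by (intro card_mono) auto
        also have "\<dots> \<le> card {z\<in>X. {x,z} \<in> edges G}" using fX by (intro card_image_le) auto
        finally show ?thesis using x(2) by linarith
      qed
      show ?thesis
      proof (cases "\<exists>w. (Inl x, w) \<in> S")
        case True
        define W where "W = {w. (Inl x, w) \<in> S}"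
        have WV: "W \<subseteq> verts H" unfolding W_def using Svert by blast
        have Wne: "W \<noteq> {}" unfolding W_def using True by blast
        obtain w where w: "w \<in> W" "card {w'\<in>W. {w,w'} \<in> edges H} \<le> l"
          using degen_sub[OF assms(5) WV Wne] by blast
        have fW: "finite W" using WV fVH finite_subset by blast
        have "card {u\<in>S. {(Inl x,w),u} \<in> edges (Q_sum G H)}
           \<le> card {w'\<in>W. {w,w'} \<in> edges H} + card {e\<in>edges G. x\<in>e \<and> (Inr e,w)\<in>S}"
          by (rule boundL[OF fW _ assms(1)]) (simp add: W_def)
        then have "card {u\<in>S. {(Inl x,w),u} \<in> edges (Q_sum G H)} \<le> max (2 * max_degree G - 2) (k + l)"
          using w(2) cardA[of w] by linarith
        moreover have "(Inl x, w) \<in> S" using w(1) unfolding W_def by blast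
        ultimately show ?thesis by blast
      next
        case False
        then obtain e w where ew: "(Inr e, w) \<in> S" "x \<in> e" using x(1) unfolding X_def by blast
        have eE: "e \<in> edges G" using ew Sedge by blast
        obtain y where y: "e = {x,y}" "y \<noteq> x" using edge2[OF assms(1) eE ew(2)] by blast
        let ?Z = "{z. (Inl z, w) \<in> S \<and> z \<in> e}"
        let ?F = "{e'\<in>edges G. e\<inter>e'\<noteq>{} \<and> (Inr e',w)\<in>S}"
        let ?A = "{e'\<in>edges G. x\<in>e' \<and> (Inr e',w)\<in>S}"
        let ?B = "{e'\<in>edges G. y\<in>e'}"
        have "?Z \<subseteq> {y}" using False y by auto
        then have cZ: "card ?Z \<le> 1" using card_mono[of "{y}" ?Z] by simp
        have "?F \<subseteq> ?A \<union> ?B" using y by auto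
        then have "card ?F \<le> card (?A \<union> ?B)" using fE by (intro card_mono) auto
        moreover have "card (?A \<union> ?B) + 1 \<le> card ?A + card ?B"
          by (rule card_Un_common[of _ _ e]) (use fE eE ew y in auto)
        moreover have "card ?B \<le> \<Delta>" using deg_at .
        ultimately have cF: "card ?F \<le> k + \<Delta> - 1" using cardA[of w] by linarith
        have "card {u\<in>S. {(Inr e,w),u} \<in> edges (Q_sum G H)} \<le> card ?Z + (card ?F - 1)"
          by (rule boundR[OF assms(1) eE ew(1)])
        also have "\<dots> \<le> 2 * \<Delta> - 2" using cZ cF True D2 by linarith
        finally have "card {u\<in>S. {(Inr e,w),u} \<in> edges (Q_sum G H)} \<le> max (2 * max_degree G - 2) (k + l)"
          unfolding \<Delta>_def by linarith
        then show ?thesis using ew(1) by blast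
      qed
    next
      case False
      show ?thesis
      proof (cases "\<exists>x w. (Inl x, w) \<in> S")
        case True
        define W where "W = {w. \<exists>x. (Inl x, w) \<in> S}"
        have WV: "W \<subseteq> verts H" unfolding W_def using Svert by blast
        have Wne: "W \<noteq> {}" unfolding W_def using True by blast
        obtain w where w: "w \<in> W" "card {w'\<in>W. {w,w'} \<in> edges H} \<le> l"
          using degen_sub[OF assms(5) WV Wne] by blast
        obtain x where xw: "(Inl x, w) \<in> S" using w(1) unfolding W_def by blast
        have fW: "finite W" using WV fVH finite_subset by blast
        have "card {e\<in>edges G. x\<in>e \<and> (Inr e,w)\<in>S} \<le> card {e\<in>edges G. x\<in>e}"
          using fE by (intro card_mono) auto
        then have c2: "card {e\<in>edges G. x\<in>e \<and> (Inr e,w)\<in>S} \<le> \<Delta>" using deg_at[of x] by linarith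
        have "card {u\<in>S. {(Inl x,w),u} \<in> edges (Q_sum G H)}
           \<le> card {w'\<in>W. {w,w'} \<in> edges H} + card {e\<in>edges G. x\<in>e \<and> (Inr e,w)\<in>S}"
          by (rule boundL[OF fW _ assms(1)]) (auto simp add: W_def)
        then have "card {u\<in>S. {(Inl x,w),u} \<in> edges (Q_sum G H)} \<le> max (2 * max_degree G - 2) (k + l)"
          using w(2) c2 False by linarith
        then show ?thesis using xw by blast
      next
        case noL: False
        obtain a w where aw: "(a, w) \<in> S" using S(2) by auto
        then obtain e where ew: "(Inr e, w) \<in> S" using noL by (cases a) auto
        have eE: "e \<in> edges G" using ew Sedge by blast
        obtain x y where y: "e = {x,y}" "x \<noteq> y" using edge_elem[OF assms(1) eE] by metis
        let ?Z = "{z. (Inl z, w) \<in> S \<and> z \<in> e}"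
        let ?F = "{e'\<in>edges G. e\<inter>e'\<noteq>{} \<and> (Inr e',w)\<in>S}"
        let ?A = "{e'\<in>edges G. x\<in>e'}"
        let ?B = "{e'\<in>edges G. y\<in>e'}"
        have "?Z = {}" using noL by auto
        then have cZ: "card ?Z = 0" by (metis card.empty)
        have "?F \<subseteq> ?A \<union> ?B" using y by auto
        then have "card ?F \<le> card (?A \<union> ?B)" using fE by (intro card_mono) auto
        moreover have "card (?A \<union> ?B) + 1 \<le> card ?A + card ?B"
          by (rule card_Un_common[of _ _ e]) (use fE eE y in auto)
        moreover have "card ?B \<le> \<Delta>" "card ?A \<le> \<Delta>" using deg_at by auto
        ultimately have cF: "card ?F \<le> 2 * \<Delta> - 1" by linarith
        have "card {u\<in>S. {(Inr e,w),u} \<in> edges (Q_sum G H)} \<le> card ?Z + (card ?F - 1)"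
          by (rule boundR[OF assms(1) eE ew(1)])
        also have "\<dots> \<le> 2 * \<Delta> - 2" using cZ cF D2 by linarith
        finally have "card {u\<in>S. {(Inr e,w),u} \<in> edges (Q_sum G H)} \<le> max (2 * max_degree G - 2) (k + l)"
          unfolding \<Delta>_def by linarith
        then show ?thesis using ew(1) by blast
      qed
    qed
  qed
qed

end
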